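(* Let $n$ be even and $f,g:\mathbb{F}_2^n\to\mathbb{F}_2$ bent functions with $g(\mathbf{x})=f(\mathbf{x}\oplus\mathbf{b})\oplus\mathbf{c}\cdot\mathbf{x}\oplus d$ for all $\mathbf{x}$, where $\mathbf{b},\mathbf{c}\in\mathbb{F}_2^n$, $d\in\mathbb{F}_2$. Let $\tilde f$ be the dual of $f$. Starting from $\ket{0^n}$ and applying in order $\mathrm{H}^{\otimes n}$, $U_g$, $\mathrm{H}^{\otimes n}$, $U_{\tilde f}$, $\mathrm{H}^{\otimes n}$, the state before measurement is $$(-1)^{\mathbf{b}\cdot\mathbf{c}\oplus d}\,2^{-n}\sum_{\mathbf{y},\mathbf{z}\in\mathbb{F}_2^n}(-1)^{\tilde f(\mathbf{y}\oplus\mathbf{c})\oplus\tilde f(\mathbf{y})\oplus\mathbf{y}\cdot(\mathbf{z}\oplus\mathbf{b})}\ket{\mathbf{z}},$$ and the probability of observing $\mathbf{z}\in\mathbb{F}_2^n$ upon measurement is $2^{-2n}\left|\sum_{\mathbf{y}\in\mathbb{F}_2^n}(-1)^{\tilde f(\mathbf{y}\oplus\mathbf{c})\oplus\tilde f(\mathbf{y})\oplus\mathbf{y}\cdot(\mathbf{z}\oplus\mathbf{b})}\right|^2$.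
   Context: $\mathbf{x}\cdot\mathbf{y}=\bigoplus_ix_iy_i$. Walsh–Hadamard transform: $W_f(\boldsymbol{\omega})=2^{-n/2}\sum_{\mathbf{x}}(-1)^{f(\mathbf{x})\oplus\mathbf{x}\cdot\boldsymbol{\omega}}$. $f$ is bent if $W_f(\boldsymbol{\omega})=\pm1$ for all $\boldsymbol{\omega}$; its dual $\tilde f$ is the Boolean function with $(-1)^{\tilde f(\mathbf{x})}=W_f(\mathbf{x})$. $\mathrm{H}$ is the Hadamard gate and $U_h$ the phase oracle $\ket{\mathbf{x}}\mapsto(-1)^{h(\mathbf{x})}\ket{\mathbf{x}}$. *)

theory Defs
  imports Complex_Main
begin

(* Vectors of F_2^n are boolean lists of length n; F_2 is bool, with XOR being (\<noteq>). *)

definition vecs :: "nat \<Rightarrow> bool list set" where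
  "vecs n = {xs. length xs = n}"

definition bxor :: "bool list \<Rightarrow> bool list \<Rightarrow> bool list" where
  "bxor xs ys = map2 (\<noteq>) xs ys"

definition dot :: "bool list \<Rightarrow> bool list \<Rightarrow> bool" where
  "dot xs ys = odd (card {i. i < length xs \<and> i < length ys \<and> xs ! i \<and> ys ! i})"

definition sgnb :: "bool \<Rightarrow> 'a::{one,uminus}" where
  "sgnb b = (if b then - 1 else 1)"

definition walsh :: "nat \<Rightarrow> (bool list \<Rightarrow> bool) \<Rightarrow> bool list \<Rightarrow> real" where
  "walsh n f w = (1 / sqrt (2 ^ n)) * (\<Sum>x\<in>vecs n. sgnb (f x \<noteq> dot x w))"

definition bent :: "nat \<Rightarrow> (bool list \<Rightarrow> bool) \<Rightarrow> bool" where
  "bent n f \<longleftrightarrow> (\<forall>w\<in>vecs n. walsh n f w = 1 \<or> walsh n f w = - 1)"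

definition is_dual :: "nat \<Rightarrow> (bool list \<Rightarrow> bool) \<Rightarrow> (bool list \<Rightarrow> bool) \<Rightarrow> bool" where
  "is_dual n f ft \<longleftrightarrow> (\<forall>x\<in>vecs n. sgnb (ft x) = walsh n f x)"

(* n-qubit states: amplitude functions on computational basis vectors (only values on vecs n matter). *)
type_synonym state = "bool list \<Rightarrow> complex"

definition ket0 :: "nat \<Rightarrow> state" where
  "ket0 n = (\<lambda>x. if x = replicate n False then 1 else 0)"

definition hadn :: "nat \<Rightarrow> state \<Rightarrow> state" where
  "hadn n \<psi> = (\<lambda>z. complex_of_real (1 / sqrt (2 ^ n)) * (\<Sum>x\<in>vecs n. sgnb (dot x z) * \<psi> x))"

definition phase_op :: "(bool list \<Rightarrow> bool) \<Rightarrow> state \<Rightarrow> state" where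
  "phase_op h \<psi> = (\<lambda>x. sgnb (h x) * \<psi> x)"

definition meas_prob :: "state \<Rightarrow> bool list \<Rightarrow> real" where
  "meas_prob \<psi> z = (cmod (\<psi> z))\<^sup>2"

end

theory Submission
  imports Defs
begin

lemma finite_vecs: "finite (vecs n)"
proof -
  have "vecs n = {xs. set xs \<subseteq> (UNIV::bool set) \<and> length xs = n}" by (auto simp: vecs_def)
  then show ?thesis using finite_lists_length_eq[of "UNIV::bool set" n] by simp
qed

lemma length_bxor[simp]: "length (bxor x y) = min (length x) (length y)"
  by (simp add: bxor_def)

lemma nth_bxor: "i < length x \<Longrightarrow> i < length y \<Longrightarrow> bxor x y ! i = (x!i \<noteq> y!i)"
  by (simp add: bxor_def)

lemma bxor_vecs: "x \<in> vecs n \<Longrightarrow> y \<in> vecs n \<Longrightarrow> bxor x y \<in> vecs n"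
  by (simp add: vecs_def)

lemma bxor_cancel: "length x = length y \<Longrightarrow> bxor (bxor x y) y = x"
  by (rule nth_equalityI) (auto simp: nth_bxor)

lemma bxor_comm: "bxor x y = bxor y x"
  by (rule nth_equalityI) (auto simp: nth_bxor)

lemma dot_comm: "dot x y = dot y x"
  unfolding dot_def by (metis (no_types, lifting) Collect_cong)

lemma dot_Nil[simp]: "dot [] ys = False" "dot xs [] = False"
  by (simp_all add: dot_def)

lemma dot_Cons[simp]: "dot (a#xs) (b#ys) = ((a \<and> b) \<noteq> dot xs ys)"
proof -
  define S where "S = {i. i < length xs \<and> i < length ys \<and> xs!i \<and> ys!i}"
  have fin: "finite S" unfolding S_def by simp
  have eq: "{i. i < length (a#xs) \<and> i < length (b#ys) \<and> (a#xs)!i \<and> (b#ys)!i}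
        = {i. i = 0 \<and> a \<and> b} \<union> Suc ` S"
    unfolding S_def
    apply (rule set_eqI)
    subgoal for i by (cases i) auto
    done
  have c: "card (Suc ` S) = card S" by (simp add: card_image)
  show ?thesis
  proof (cases "a \<and> b")
    case True
    then have "{i. i = 0 \<and> a \<and> b} \<union> Suc ` S = insert 0 (Suc ` S)" by auto
    then have "card {i. i < length (a#xs) \<and> i < length (b#ys) \<and> (a#xs)!i \<and> (b#ys)!i} = Suc (card S)"
      using eq fin c by simp
    moreover have "dot xs ys = odd (card S)" unfolding dot_def S_def by simp
    ultimately show ?thesis using True unfolding dot_def by simp
  next
    case False
    then have "{i. i = 0 \<and> a \<and> b} \<union> Suc ` S = Suc ` S" by auto
    then have "card {i. i < length (a#xs) \<and> i < length (b#ys) \<and> (a#xs)!i \<and> (b#ys)!i} = card S"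
      using eq fin c by simp
    moreover have "dot xs ys = odd (card S)" unfolding dot_def S_def by simp
    ultimately show ?thesis using False unfolding dot_def by auto
  qed
qed

lemma dot_bxor: "length x = length y \<Longrightarrow> length z = length x \<Longrightarrow>
   dot (bxor x y) z = (dot x z \<noteq> dot y z)"
proof (induction x arbitrary: y z)
  case Nil then show ?case by (simp add: bxor_def)
next
  case (Cons a x)
  then obtain b y' where y: "y = b # y'" by (cases y) auto
  from Cons obtain e z' where z: "z = e # z'" by (cases z) auto
  have "bxor (a#x) y = (a \<noteq> b) # bxor x y'" using y by (simp add: bxor_def)
  moreover have "length x = length y'" "length z' = length x" using Cons y z by auto
  ultimately show ?case using Cons.IH y z by (simp only: dot_Cons) blast
qed

lemma dot_zero: "dot (replicate n False) z = False"
proof -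
  have "{i. i < length (replicate n False) \<and> i < length z \<and> replicate n False ! i \<and> z ! i} = {}" by auto
  then show ?thesis unfolding dot_def by (metis card.empty even_zero)
qed

lemma sgnb_xor: "sgnb (a \<noteq> b) = (sgnb a * sgnb b :: 'a::comm_ring_1)"
  by (simp add: sgnb_def)

lemma sgnb_sq: "sgnb a * sgnb a = (1::'a::comm_ring_1)"
  by (simp add: sgnb_def)

lemma of_real_sgnb: "of_real (sgnb a) = (sgnb a :: 'a::real_algebra_1)"
  by (simp add: sgnb_def)

lemma sum_shift: "b \<in> vecs n \<Longrightarrow> sum h (vecs n) = sum (\<lambda>u. h (bxor u b)) (vecs n)"
  by (rule sum.reindex_bij_witness[where i="\<lambda>x. bxor x b" and j="\<lambda>x. bxor x b"])
     (auto simp: bxor_vecs bxor_cancel vecs_def)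


lemma sgnb_pair: "(a \<noteq> b) = (c \<noteq> e) \<Longrightarrow> sgnb a * sgnb b = (sgnb c * sgnb e :: 'a::comm_ring_1)"
  by (cases a; cases b; cases c; cases e) (auto simp: sgnb_def)

lemma sgnb_triple: "((a \<noteq> b) \<noteq> k) = (c \<noteq> e) \<Longrightarrow> sgnb a * sgnb b * sgnb k = (sgnb c * sgnb e :: 'a::comm_ring_1)"
  by (cases a; cases b; cases c; cases e; cases k) (auto simp: sgnb_def)

lemma sgnb_one: "(a \<noteq> b) = c \<Longrightarrow> sgnb a * sgnb b = (sgnb c :: 'a::comm_ring_1)"
  by (cases a; cases b; cases c) (auto simp: sgnb_def)

lemma cmod_sgnb[simp]: "cmod (sgnb a) = 1"
  by (simp add: sgnb_def)

theorem theorem11: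
  fixes n :: nat and f g ft :: "bool list \<Rightarrow> bool" and b c :: "bool list" and d :: bool
  assumes "even n"
    and "bent n f" and "bent n g"
    and "b \<in> vecs n" and "c \<in> vecs n"
    and "\<forall>x\<in>vecs n. g x = ((f (bxor x b) \<noteq> dot c x) \<noteq> d)"
    and "is_dual n f ft"
  shows "(\<forall>z\<in>vecs n.
           hadn n (phase_op ft (hadn n (phase_op g (hadn n (ket0 n))))) z
           = sgnb (dot b c \<noteq> d) * complex_of_real (1 / 2 ^ n) *
             (\<Sum>y\<in>vecs n. sgnb ((ft (bxor y c) \<noteq> ft y) \<noteq> dot y (bxor z b)))) \<and>
         (\<forall>z\<in>vecs n.
           meas_prob (hadn n (phase_op ft (hadn n (phase_op g (hadn n (ket0 n)))))) z
           = (1 / 2 ^ (2 * n)) *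
             (cmod (\<Sum>y\<in>vecs n. sgnb ((ft (bxor y c) \<noteq> ft y) \<noteq> dot y (bxor z b)) :: complex))\<^sup>2)"
proof -
  note gdef = assms(6)
  define s where "s = sqrt (2 ^ n :: real)"
  have spos: "s > 0" unfolding s_def by simp
  have ss: "s * s = 2 ^ n" unfolding s_def by simp
  have ic: "complex_of_real (1/s) * complex_of_real (1/s) = complex_of_real (1 / 2 ^ n)"
    by (metis ss of_real_mult times_divide_times_eq mult_1)
  have len: "\<And>x. x \<in> vecs n \<Longrightarrow> length x = n" by (simp add: vecs_def)
  define K where "K y = (((d \<noteq> dot b c) \<noteq> dot b y) \<noteq> ft (bxor y c))" for y
  have psi1: "hadn n (ket0 n) = (\<lambda>z. complex_of_real (1/s))"
  proof
    fix z
    have "(\<Sum>x\<in>vecs n. sgnb (dot x z) * ket0 n x) = (\<Sum>x\<in>vecs n. if x = replicate n False then sgnb (dot (replicate n False) z) else 0)"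
      by (rule sum.cong) (auto simp: ket0_def)
    also have "\<dots> = 1" using finite_vecs by (simp add: vecs_def dot_zero sgnb_def)
    finally show "hadn n (ket0 n) z = complex_of_real (1/s)" unfolding hadn_def s_def by simp
  qed
  have walshsum: "(\<Sum>u\<in>vecs n. sgnb (f u \<noteq> dot u w) :: complex) = of_real s * sgnb (ft w)"
    if w: "w \<in> vecs n" for w
  proof -
    have "(\<Sum>u\<in>vecs n. sgnb (f u \<noteq> dot u w) :: complex) = of_real (\<Sum>u\<in>vecs n. sgnb (f u \<noteq> dot u w))"
      by (simp add: of_real_sgnb)
    also have "(\<Sum>u\<in>vecs n. sgnb (f u \<noteq> dot u w)) = s * walsh n f w"
      unfolding walsh_def s_def[symmetric] using spos by simp
    also have "walsh n f w = sgnb (ft w)" using assms(7) w unfolding is_dual_def by simp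
    finally show ?thesis by (simp add: of_real_sgnb)
  qed
  have W: "(\<Sum>x\<in>vecs n. sgnb (dot x y) * sgnb (g x) :: complex) = of_real s * sgnb (K y)"
    if y: "y \<in> vecs n" for y
  proof -
    have "(\<Sum>x\<in>vecs n. sgnb (dot x y) * sgnb (g x) :: complex)
        = (\<Sum>x\<in>vecs n. sgnb (dot x y) * sgnb ((f (bxor x b) \<noteq> dot c x) \<noteq> d))"
      by (rule sum.cong) (auto simp: gdef)
    also have "\<dots> = (\<Sum>u\<in>vecs n. sgnb (dot (bxor u b) y) * sgnb ((f (bxor (bxor u b) b) \<noteq> dot c (bxor u b)) \<noteq> d))"
      by (rule sum_shift[OF assms(4)])
    also have "\<dots> = (\<Sum>u\<in>vecs n. sgnb ((dot b c \<noteq> d) \<noteq> dot b y) * sgnb (f u \<noteq> dot u (bxor y c)))"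
    proof (rule sum.cong[OF refl])
      fix u assume u: "u \<in> vecs n"
      have lu: "length u = n" "length b = n" "length c = n" "length y = n"
        using u assms(4,5) y by (auto simp: vecs_def)
      have e1: "bxor (bxor u b) b = u" using lu by (simp add: bxor_cancel)
      have e2: "dot (bxor u b) y = (dot u y \<noteq> dot b y)" using lu by (simp add: dot_bxor)
      have e3: "dot c (bxor u b) = (dot u c \<noteq> dot b c)" using lu by (simp add: dot_bxor dot_comm[of c])
      have e4: "dot u (bxor y c) = (dot y u \<noteq> dot c u)" using lu by (simp add: dot_bxor dot_comm[of u])
      have "(dot (bxor u b) y \<noteq> ((f (bxor (bxor u b) b) \<noteq> dot c (bxor u b)) \<noteq> d))
          = (((dot b c \<noteq> d) \<noteq> dot b y) \<noteq> (f u \<noteq> dot u (bxor y c)))"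
        unfolding e1 e2 e3 e4 using dot_comm[of u y] dot_comm[of u c] by auto
      then show "sgnb (dot (bxor u b) y) * sgnb ((f (bxor (bxor u b) b) \<noteq> dot c (bxor u b)) \<noteq> d)
          = (sgnb ((dot b c \<noteq> d) \<noteq> dot b y) * sgnb (f u \<noteq> dot u (bxor y c)) :: complex)"
        by (rule sgnb_pair)
    qed
    also have "\<dots> = sgnb ((dot b c \<noteq> d) \<noteq> dot b y) * (of_real s * sgnb (ft (bxor y c)))"
      by (subst sum_distrib_left[symmetric], subst walshsum[OF bxor_vecs[OF y assms(5)]], rule refl)
    also have "\<dots> = of_real s * sgnb (K y)"
    proof -
      have "sgnb ((dot b c \<noteq> d) \<noteq> dot b y) * sgnb (ft (bxor y c)) = (sgnb (K y) :: complex)"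
        by (rule sgnb_one) (auto simp: K_def)
      then show ?thesis by (metis mult.left_commute)
    qed
    finally show ?thesis .
  qed
  have psi3: "hadn n (phase_op g (hadn n (ket0 n))) y = of_real (1/s) * sgnb (K y)"
    if y: "y \<in> vecs n" for y
  proof -
    have "hadn n (phase_op g (hadn n (ket0 n))) y
       = of_real (1/s) * (\<Sum>x\<in>vecs n. sgnb (dot x y) * (sgnb (g x) * of_real (1/s)))"
      unfolding psi1 unfolding phase_op_def hadn_def s_def by (simp add: sum_divide_distrib)
    also have "\<dots> = of_real (1/s) * of_real (1/s) * (\<Sum>x\<in>vecs n. sgnb (dot x y) * sgnb (g x))"
      by (simp add: sum_distrib_left sum_distrib_right mult_ac)
    also have "\<dots> = of_real (1/s) * sgnb (K y)"
      unfolding W[OF y] using spos by (simp add: field_simps)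
    finally show ?thesis .
  qed
  have part1: "hadn n (phase_op ft (hadn n (phase_op g (hadn n (ket0 n))))) z
           = sgnb (dot b c \<noteq> d) * complex_of_real (1 / 2 ^ n) *
             (\<Sum>y\<in>vecs n. sgnb ((ft (bxor y c) \<noteq> ft y) \<noteq> dot y (bxor z b)))"
    if z: "z \<in> vecs n" for z
  proof -
    have "hadn n (phase_op ft (hadn n (phase_op g (hadn n (ket0 n))))) z
       = of_real (1/s) * (\<Sum>y\<in>vecs n. sgnb (dot y z) * (sgnb (ft y) * (of_real (1/s) * sgnb (K y))))"
    proof -
      have ph: "\<And>y. y \<in> vecs n \<Longrightarrow> phase_op ft (hadn n (phase_op g (hadn n (ket0 n)))) y = sgnb (ft y) * (of_real (1/s) * sgnb (K y))"
        unfolding phase_op_def[of ft] using psi3 by simp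
      have "hadn n (phase_op ft (hadn n (phase_op g (hadn n (ket0 n))))) z
         = of_real (1/s) * (\<Sum>y\<in>vecs n. sgnb (dot y z) * phase_op ft (hadn n (phase_op g (hadn n (ket0 n)))) y)"
        unfolding hadn_def[of n "phase_op ft (hadn n (phase_op g (hadn n (ket0 n))))"] s_def by (rule refl)
      also have "\<dots> = of_real (1/s) * (\<Sum>y\<in>vecs n. sgnb (dot y z) * (sgnb (ft y) * (of_real (1/s) * sgnb (K y))))"
        by (rule arg_cong[where f="\<lambda>t. of_real (1/s) * t"], rule sum.cong[OF refl]) (simp only: ph)
      finally show ?thesis .
    qed
    also have "\<dots> = of_real (1/s) * of_real (1/s) * (\<Sum>y\<in>vecs n. sgnb (dot b c \<noteq> d) * sgnb ((ft (bxor y c) \<noteq> ft y) \<noteq> dot y (bxor z b)))"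
    proof -
      have "(\<Sum>y\<in>vecs n. sgnb (dot y z) * (sgnb (ft y) * (of_real (1/s) * sgnb (K y))))
          = (of_real (1/s) :: complex) * (\<Sum>y\<in>vecs n. sgnb (dot b c \<noteq> d) * sgnb ((ft (bxor y c) \<noteq> ft y) \<noteq> dot y (bxor z b)))"
      proof -
      have pw: "sgnb (dot y z) * (sgnb (ft y) * (of_real (1/s) * sgnb (K y)))
          = of_real (1/s) * (sgnb (dot b c \<noteq> d) * sgnb ((ft (bxor y c) \<noteq> ft y) \<noteq> dot y (bxor z b)) :: complex)"
        if y: "y \<in> vecs n" for y
      proof -
        have lu: "length z = n" "length b = n" "length y = n"
          using z assms(4) y by (auto simp: vecs_def)
        have e: "dot y (bxor z b) = (dot y z \<noteq> dot b y)"
        proof -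
          have "dot y (bxor z b) = dot (bxor z b) y" by (rule dot_comm)
          also have "\<dots> = (dot z y \<noteq> dot b y)" using lu by (simp add: dot_bxor)
          finally show ?thesis by (simp add: dot_comm[of z y])
        qed
        have "((dot y z \<noteq> ft y) \<noteq> K y) = ((dot b c \<noteq> d) \<noteq> ((ft (bxor y c) \<noteq> ft y) \<noteq> dot y (bxor z b)))"
          unfolding e K_def by auto
        then have "sgnb (dot y z) * sgnb (ft y) * sgnb (K y) = (sgnb (dot b c \<noteq> d) * sgnb ((ft (bxor y c) \<noteq> ft y) \<noteq> dot y (bxor z b)) :: complex)"
          by (rule sgnb_triple)
        then show ?thesis
          by (simp add: mult_ac)
      qed
      show ?thesis unfolding sum_distrib_left by (rule sum.cong[OF refl]) (rule pw)
      qed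
      then show ?thesis by (simp add: mult_ac)
    qed
    also have "\<dots> = sgnb (dot b c \<noteq> d) * complex_of_real (1 / 2 ^ n) *
             (\<Sum>y\<in>vecs n. sgnb ((ft (bxor y c) \<noteq> ft y) \<noteq> dot y (bxor z b)))"
      unfolding ic by (simp add: sum_distrib_left[symmetric] mult_ac)
    finally show ?thesis .
  qed
  show ?thesis
  proof (intro conjI ballI)
    fix z assume z: "z \<in> vecs n"
    show "hadn n (phase_op ft (hadn n (phase_op g (hadn n (ket0 n))))) z
           = sgnb (dot b c \<noteq> d) * complex_of_real (1 / 2 ^ n) *
             (\<Sum>y\<in>vecs n. sgnb ((ft (bxor y c) \<noteq> ft y) \<noteq> dot y (bxor z b)))"
      by (rule part1[OF z])
  next
    fix z assume z: "z \<in> vecs n"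
    have "(1::real) / 2 ^ (2 * n) = (1 / 2 ^ n)^2" by (simp add: power_mult power_divide power2_eq_square mult.commute)
    then show "meas_prob (hadn n (phase_op ft (hadn n (phase_op g (hadn n (ket0 n)))))) z
           = (1 / 2 ^ (2 * n)) *
             (cmod (\<Sum>y\<in>vecs n. sgnb ((ft (bxor y c) \<noteq> ft y) \<noteq> dot y (bxor z b)) :: complex))\<^sup>2"
      unfolding meas_prob_def part1[OF z] by (simp add: norm_mult norm_divide norm_power power_divide)
  qed
qed

end
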